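(* Let $\mu\in\mathcal P_c^*(\mathbb R^2)$, $\mathbf A\in\mathrm{GL}(2)$, $\mathbf y\in\mathbb R^2$ and $\mu_{\mathbf A,\mathbf y}=(\mathbf A\cdot+\mathbf y)_\#\mu$. Then for every $\theta\in\mathbb S_1$, $$\mathcal N_\theta[\mu_{\mathbf A,\mathbf y}]=\mathcal N_{\mathbf A^\top\theta/\|\mathbf A^\top\theta\|}[\mu].$$
   Context: $\mathbb S_1=\{x\in\mathbb R^2:\|x\|=1\}$; $\mathcal R_\theta[\mu]=(\langle\cdot,\theta\rangle)_\#\mu$. Fix a reference Borel probability measure $\rho$ on $\mathbb R$ without atoms. For a probability measure $\nu$ on $\mathbb R$ with $F_\nu(t)=\nu((-\infty,t])$, $F_\nu^{[-1]}(t)=\inf\{s:F_\nu(s)>t\}$ and the CDT is $\hat\nu=F_\nu^{[-1]}\circ F_\rho$; $\widehat{\mathcal R}_\theta[\mu]$ is the CDT of $\mathcal R_\theta[\mu]$. For $g\in L^2_\rho(\mathbb R)$, $\operatorname{mean}(g)=\int g\,\mathrm d\rho$, $\operatorname{std}(g)=(\int|g-\operatorname{mean}(g)|^2\mathrm d\rho)^{1/2}$. $\mathcal P_c^*(\mathbb R^2)$ is the set of compactly supported Borel probability measures on $\mathbb R^2$ whose support has affine hull of dimension $>1$. For such $\mu$, the normalized R-CDT is $\mathcal N_\theta[\mu](t)=\big(\widehat{\mathcal R}_\theta[\mu](t)-\operatorname{mean}(\widehat{\mathcal R}_\theta[\mu])\big)/\operatorname{std}(\widehat{\mathcal R}_\theta[\mu])$,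 $t\in\mathbb R$. *)

theory Defs
  imports "HOL-Probability.Probability"
begin

definition msupport :: "'a::metric_space measure \<Rightarrow> 'a set" where
  "msupport M = {x. \<forall>e>0. emeasure M (ball x e) > 0}"

definition Pcstar :: "(real^2) measure \<Rightarrow> bool" where
  "Pcstar \<mu> \<longleftrightarrow> prob_space \<mu> \<and> sets \<mu> = sets borel \<and> compact (msupport \<mu>)
      \<and> aff_dim (msupport \<mu>) > 1"

definition radon :: "real^2 \<Rightarrow> (real^2) measure \<Rightarrow> real measure" where
  "radon \<theta> \<mu> = distr \<mu> borel (\<lambda>x. x \<bullet> \<theta>)"

definition cdf_of :: "real measure \<Rightarrow> real \<Rightarrow> real" where
  "cdf_of \<nu> t = measure \<nu> {..t}"

definition gen_inv :: "(real \<Rightarrow> real) \<Rightarrow> real \<Rightarrow> real" where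
  "gen_inv F t = Inf {s. F s > t}"

definition cdt :: "real measure \<Rightarrow> real measure \<Rightarrow> real \<Rightarrow> real" where
  "cdt \<rho> \<nu> = gen_inv (cdf_of \<nu>) \<circ> cdf_of \<rho>"

definition mean_rho :: "real measure \<Rightarrow> (real \<Rightarrow> real) \<Rightarrow> real" where
  "mean_rho \<rho> g = (\<integral>t. g t \<partial>\<rho>)"

definition std_rho :: "real measure \<Rightarrow> (real \<Rightarrow> real) \<Rightarrow> real" where
  "std_rho \<rho> g = sqrt (\<integral>t. (g t - mean_rho \<rho> g)\<^sup>2 \<partial>\<rho>)"

definition nrcdt :: "real measure \<Rightarrow> real^2 \<Rightarrow> (real^2) measure \<Rightarrow> real \<Rightarrow> real" where
  "nrcdt \<rho> \<theta> \<mu> t =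
     (let g = cdt \<rho> (radon \<theta> \<mu>) in (g t - mean_rho \<rho> g) / std_rho \<rho> g)"

end

theory Submission
  imports Defs
begin

lemma gi_bounds:
  assumes lo: "\<And>s. s < -R \<Longrightarrow> F s = 0" and hi: "\<And>s. s \<ge> R \<Longrightarrow> F s = 1"
    and "0 \<le> \<tau>" "\<tau> < 1"
  shows "R \<in> {s. F s > \<tau>}" "bdd_below {s. F s > \<tau>}" "-R \<le> gen_inv F \<tau>" "gen_inv F \<tau> \<le> R"
proof -
  show 1: "R \<in> {s. F s > \<tau>}" using hi assms by simp
  have lb: "-R \<le> s" if "s \<in> {s. F s > \<tau>}" for s
  proof (rule ccontr)
    assume "\<not> - R \<le> s" then have "F s = 0" using lo by simp
    then show False using that assms by simp
  qed
  show "bdd_below {s. F s > \<tau>}" unfolding bdd_below_def using lb by blast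
  show "-R \<le> gen_inv F \<tau>" unfolding gen_inv_def using 1 lb by (intro cInf_greatest) auto
  show "gen_inv F \<tau> \<le> R" unfolding gen_inv_def using 1 lb
    by (intro cInf_lower) (auto simp: bdd_below_def)
qed

lemma gi_mono:
  assumes lo: "\<And>s. s < -R \<Longrightarrow> F s = 0" and hi: "\<And>s. s \<ge> R \<Longrightarrow> F s = 1"
    and "0 \<le> a" "a \<le> b" "b < 1"
  shows "gen_inv F a \<le> gen_inv F b"
proof -
  have "F R = 1" using hi by simp
  then have "R \<in> {s. F s > b}" using \<open>b < 1\<close> by simp
  then have 1: "{s. F s > b} \<noteq> {}" by blast
  have 2: "bdd_below {s. F s > a}" using gi_bounds(2)[OF lo hi, where \<tau>=a] assms by auto
  have 3: "{s. F s > b} \<subseteq> {s. F s > a}" using assms by auto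
  show ?thesis unfolding gen_inv_def using cInf_superset_mono[OF 1 2 3] .
qed

lemma gi_affine:
  fixes c b :: real
  assumes lo: "\<And>s. s < -R \<Longrightarrow> F s = 0" and hi: "\<And>s. s \<ge> R \<Longrightarrow> F s = 1"
    and c: "c > 0" and F': "\<And>u. F' u = F ((u - b) / c)"
    and "0 \<le> \<tau>" "\<tau> < 1"
  shows "gen_inv F' \<tau> = c * gen_inv F \<tau> + b"
proof -
  let ?T = "{s. F s > \<tau>}"
  have ne: "R \<in> ?T" and bb: "bdd_below ?T" using gi_bounds[OF lo hi] assms by auto
  have img: "{u. F' u > \<tau>} = (\<lambda>s. c * s + b) ` ?T"
  proof (rule set_eqI, rule iffI)
    fix u assume "u \<in> {u. F' u > \<tau>}"
    then have "(u - b) / c \<in> ?T" using F' by simp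
    moreover have "u = c * ((u - b) / c) + b" using c by simp
    ultimately show "u \<in> (\<lambda>s. c * s + b) ` ?T" by blast
  next
    fix u assume "u \<in> (\<lambda>s. c * s + b) ` ?T"
    then obtain s where "s \<in> ?T" "u = c * s + b" by blast
    then show "u \<in> {u. F' u > \<tau>}" using F' c by simp
  qed
  let ?m = "Inf ?T"
  have l1: "c * ?m + b \<le> Inf ((\<lambda>s. c * s + b) ` ?T)"
  proof (rule cInf_greatest)
    show "(\<lambda>s. c * s + b) ` ?T \<noteq> {}" using ne by blast
    fix u assume "u \<in> (\<lambda>s. c * s + b) ` ?T"
    then obtain s where s: "s \<in> ?T" "u = c * s + b" by blast
    have "?m \<le> s" using s bb by (intro cInf_lower) auto
    then show "c * ?m + b \<le> u" using s c by (simp add: mult_left_mono)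
  qed
  have bb2: "bdd_below ((\<lambda>s. c * s + b) ` ?T)"
  proof (rule bdd_belowI[where m="c * ?m + b"])
    fix u assume "u \<in> (\<lambda>s. c * s + b) ` ?T"
    then obtain s where s: "s \<in> ?T" "u = c * s + b" by blast
    have "?m \<le> s" using s bb by (intro cInf_lower) auto
    then show "c * ?m + b \<le> u" using s c by (simp add: mult_left_mono)
  qed
  have "(Inf ((\<lambda>s. c * s + b) ` ?T) - b) / c \<le> ?m"
  proof (rule cInf_greatest)
    show "?T \<noteq> {}" using ne by blast
    fix s assume "s \<in> ?T"
    then have "Inf ((\<lambda>s. c * s + b) ` ?T) \<le> c * s + b" using bb2 by (intro cInf_lower) auto
    then show "(Inf ((\<lambda>s. c * s + b) ` ?T) - b) / c \<le> s" using c by (simp add: field_simps)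
  qed
  then have "Inf ((\<lambda>s. c * s + b) ` ?T) \<le> c * ?m + b" using c by (simp add: field_simps)
  with l1 show ?thesis unfolding gen_inv_def img by simp
qed



lemma cdf_props:
  assumes P: "prob_space \<rho>" and S: "sets \<rho> = sets borel"
  shows "mono (cdf_of \<rho>)" "\<And>t. 0 \<le> cdf_of \<rho> t" "\<And>t. cdf_of \<rho> t \<le> 1"
    "cdf_of \<rho> \<in> borel_measurable borel" "cdf_of \<rho> \<in> borel_measurable \<rho>"
proof -
  interpret real_distribution \<rho> using P S by (simp add: real_distribution_def real_distribution_axioms_def)
  have eq: "cdf_of \<rho> = cdf \<rho>" by (simp add: fun_eq_iff cdf_of_def cdf_def2)
  show m: "mono (cdf_of \<rho>)" unfolding eq by (simp add: mono_def cdf_nondecreasing)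
  show "\<And>t. 0 \<le> cdf_of \<rho> t" unfolding eq by (simp add: cdf_nonneg)
  show "\<And>t. cdf_of \<rho> t \<le> 1" unfolding eq by (simp add: cdf_bounded_prob)
  show b: "cdf_of \<rho> \<in> borel_measurable borel" using m by (rule borel_measurable_mono)
  show "cdf_of \<rho> \<in> borel_measurable \<rho>" using b measurable_cong_sets[OF S refl] by simp
qed

lemma cdt_meas:
  assumes lo: "\<And>s. s < -R \<Longrightarrow> F s = 0" and hi: "\<And>s. s \<ge> R \<Longrightarrow> F s = 1"
    and P: "prob_space \<rho>" and S: "sets \<rho> = sets borel"
  shows "(\<lambda>t. gen_inv F (cdf_of \<rho> t)) \<in> borel_measurable \<rho>"
    "\<And>t. \<bar>gen_inv F (cdf_of \<rho> t)\<bar> \<le> max R \<bar>gen_inv F 1\<bar>"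
proof -
  note C = cdf_props[OF P S]
  define m where "m \<tau> = (if \<tau> < 1 then gen_inv F (max 0 \<tau>) else R)" for \<tau>
  have mm: "mono m"
  proof (rule monoI)
    fix a b :: real assume ab: "a \<le> b"
    show "m a \<le> m b"
    proof (cases "b < 1")
      case True
      then show ?thesis using ab unfolding m_def by (auto intro!: gi_mono[OF lo hi])
    next
      case False
      then show ?thesis unfolding m_def using gi_bounds(4)[where R=R and F=F and \<tau>="max 0 a", OF lo hi] by auto
    qed
  qed
  have mb[measurable]: "m \<in> borel_measurable borel" using mm by (rule borel_measurable_mono)
  have cb[measurable]: "cdf_of \<rho> \<in> borel_measurable borel" using C by simp
  have eq: "(\<lambda>t. gen_inv F (cdf_of \<rho> t)) = (\<lambda>t. if cdf_of \<rho> t < 1 then m (cdf_of \<rho> t) else gen_inv F 1)"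
  proof
    fix t
    show "gen_inv F (cdf_of \<rho> t) = (if cdf_of \<rho> t < 1 then m (cdf_of \<rho> t) else gen_inv F 1)"
    proof (cases "cdf_of \<rho> t < 1")
      case True then show ?thesis using C(2)[of t] by (simp add: m_def max_def)
    next
      case False then have "cdf_of \<rho> t = 1" using C(3)[of t] by simp
      then show ?thesis by simp
    qed
  qed
  have "(\<lambda>t. if cdf_of \<rho> t < 1 then m (cdf_of \<rho> t) else gen_inv F 1) \<in> borel_measurable borel"
    by measurable
  then show "(\<lambda>t. gen_inv F (cdf_of \<rho> t)) \<in> borel_measurable \<rho>"
    unfolding eq by (simp add: measurable_cong_sets[OF S refl, of borel])
  fix t
  show "\<bar>gen_inv F (cdf_of \<rho> t)\<bar> \<le> max R \<bar>gen_inv F 1\<bar>"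
  proof (cases "cdf_of \<rho> t < 1")
    case True
    then show ?thesis using gi_bounds(3,4)[where R=R and F=F and \<tau>="cdf_of \<rho> t", OF lo hi] C(2)[of t] by auto
  next
    case False
    then have "cdf_of \<rho> t = 1" using C(3)[of t] by simp
    then show ?thesis by simp
  qed
qed

lemma ae_lt1:
  assumes P: "prob_space \<rho>" and S: "sets \<rho> = sets borel" and A: "\<And>x. measure \<rho> {x} = 0"
  shows "AE t in \<rho>. cdf_of \<rho> t < 1"
proof -
  interpret real_distribution \<rho> using P S by (simp add: real_distribution_def real_distribution_axioms_def)
  have eq: "cdf_of \<rho> = cdf \<rho>" by (simp add: fun_eq_iff cdf_of_def cdf_def2)
  let ?U = "{t. 1 \<le> cdf \<rho> t}"
  show ?thesis
  proof (cases "?U = {}")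
    case True
    then show ?thesis unfolding eq by (auto simp: not_le)
  next
    case False
    have ct: "continuous_on UNIV (cdf \<rho>)" using A isCont_cdf continuous_at_imp_continuous_on by blast
    have cl: "closed ?U" using ct by (intro closed_Collect_le) (auto intro: continuous_intros)
    have "eventually (\<lambda>x. cdf \<rho> x < 1/2) at_bot"
      using cdf_lim_at_bot by (rule order_tendstoD) simp
    then obtain N where N: "\<And>x. x \<le> N \<Longrightarrow> cdf \<rho> x < 1/2" by (auto simp: eventually_at_bot_linorder)
    have bb: "bdd_below ?U" unfolding bdd_below_def
    proof (intro exI ballI)
      fix x assume x: "x \<in> ?U"
      show "N \<le> x"
      proof (rule ccontr)
        assume "\<not> N \<le> x" then have "cdf \<rho> x < 1/2" using N by simp
        then show False using x by simp
      qed
    qed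
    define t0 where "t0 = Inf ?U"
    have t0U: "t0 \<in> ?U" unfolding t0_def using False bb cl by (rule closed_contains_Inf)
    have sub: "?U \<subseteq> {t0..}" unfolding t0_def using bb by (auto intro: cInf_lower)
    have "1 \<le> measure \<rho> {..t0}" using t0U by (simp add: cdf_def2)
    then have "measure \<rho> {..t0} = 1" using prob_le_1[of "{..t0}"] by simp
    have "measure \<rho> {t0..} = measure \<rho> {t0} + measure \<rho> {t0<..}"
      by (subst finite_measure_Union[symmetric]) (auto intro!: arg_cong[where f="measure \<rho>"])
    also have "measure \<rho> {t0<..} = 1 - measure \<rho> {..t0}"
      by (subst prob_compl[symmetric]) (auto intro!: arg_cong[where f="measure \<rho>"])
    finally have "measure \<rho> {t0..} = 0" using A \<open>measure \<rho> {..t0} = 1\<close> by simp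
    then have "{t0..} \<in> null_sets \<rho>" by (auto simp: null_sets_def emeasure_eq_measure S)
    then show ?thesis unfolding eq by (rule AE_I') (use sub in \<open>auto simp: not_less subset_eq\<close>)
  qed
qed



lemma main_abs:
  fixes c b R :: real
  assumes P: "prob_space \<rho>" and S: "sets \<rho> = sets borel" and A: "\<And>x. measure \<rho> {x} = 0"
    and lo: "\<And>s. s < -R \<Longrightarrow> F s = 0" and hi: "\<And>s. s \<ge> R \<Longrightarrow> F s = 1" and R: "R \<ge> 0"
    and c: "c > 0" and F': "\<And>u. F' u = F ((u - b) / c)"
    and t: "cdf_of \<rho> t < 1"
  shows "(let g = gen_inv F' \<circ> cdf_of \<rho> in (g t - mean_rho \<rho> g) / std_rho \<rho> g)
       = (let g = gen_inv F \<circ> cdf_of \<rho> in (g t - mean_rho \<rho> g) / std_rho \<rho> g)"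
proof -
  interpret prob_space \<rho> by (rule P)
  define R' where "R' = c * R + \<bar>b\<bar>"
  have lo': "F' u = 0" if "u < -R'" for u
  proof -
    have "u - b < - (c * R)" using that unfolding R'_def by linarith
    then have "(u - b) / c < -R" using c by (simp add: field_simps)
    then show ?thesis using F' lo by simp
  qed
  have hi': "F' u = 1" if "u \<ge> R'" for u
  proof -
    have "u - b \<ge> c * R" using that unfolding R'_def by linarith
    then have "(u - b) / c \<ge> R" using c by (simp add: field_simps)
    then show ?thesis using F' hi by simp
  qed
  define g where "g = gen_inv F \<circ> cdf_of \<rho>"
  define g' where "g' = gen_inv F' \<circ> cdf_of \<rho>"
  note C = cdf_props[OF P S]
  have gm[measurable]: "g \<in> borel_measurable \<rho>" unfolding g_def o_def by (rule cdt_meas(1)[where R=R and F=F, OF lo hi P S])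
  have gm'[measurable]: "g' \<in> borel_measurable \<rho>" unfolding g'_def o_def by (rule cdt_meas(1)[where R=R' and F=F', OF lo' hi' P S])
  have gb: "\<bar>g x\<bar> \<le> max R \<bar>gen_inv F 1\<bar>" for x unfolding g_def o_def by (rule cdt_meas(2)[where R=R and F=F, OF lo hi P S])
  have gi: "integrable \<rho> g"
    by (rule integrable_const_bound[where B="max R \<bar>gen_inv F 1\<bar>"]) (use gb in auto)
  have pt: "g' x = c * g x + b" if "cdf_of \<rho> x < 1" for x
    unfolding g_def g'_def o_def using gi_affine[where R=R and F=F, OF lo hi c F'] that C(2)[of x] by simp
  have ae: "AE x in \<rho>. g' x = c * g x + b" using ae_lt1[OF P S A] by eventually_elim (rule pt)
  have mean: "mean_rho \<rho> g' = c * mean_rho \<rho> g + b"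
  proof -
    have "mean_rho \<rho> g' = (\<integral>x. c * g x + b \<partial>\<rho>)" unfolding mean_rho_def
      by (rule integral_cong_AE) (use ae in auto)
    also have "\<dots> = c * mean_rho \<rho> g + b" unfolding mean_rho_def using gi by (simp add: prob_space)
    finally show ?thesis .
  qed
  have std: "std_rho \<rho> g' = c * std_rho \<rho> g"
  proof -
    have "(\<integral>x. (g' x - mean_rho \<rho> g')\<^sup>2 \<partial>\<rho>) = (\<integral>x. c\<^sup>2 * (g x - mean_rho \<rho> g)\<^sup>2 \<partial>\<rho>)"
      by (rule integral_cong_AE) (use ae in \<open>auto simp: mean power2_eq_square algebra_simps\<close>)
    also have "\<dots> = c\<^sup>2 * (\<integral>x. (g x - mean_rho \<rho> g)\<^sup>2 \<partial>\<rho>)" by simp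
    finally show ?thesis unfolding std_rho_def using c by (simp add: real_sqrt_mult)
  qed
  have "(g' t - mean_rho \<rho> g') / std_rho \<rho> g' = (c * (g t - mean_rho \<rho> g)) / (c * std_rho \<rho> g)"
    using pt[OF t] mean std by (simp add: algebra_simps)
  also have "\<dots> = (g t - mean_rho \<rho> g) / std_rho \<rho> g" using c by simp
  finally show ?thesis unfolding g_def g'_def Let_def .
qed



lemma supp_null:
  fixes \<mu> :: "(real^2) measure"
  assumes S: "sets \<mu> = sets borel"
  shows "UNIV - msupport \<mu> \<in> null_sets \<mu>"
proof -
  define F where "F = {ball x e | x e. e > 0 \<and> emeasure \<mu> (ball x e) = 0}"
  have "\<And>B. B \<in> F \<Longrightarrow> open B" unfolding F_def by auto
  then obtain F' where F': "F' \<subseteq> F" "countable F'" "\<Union>F' = \<Union>F" by (rule Lindelof)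
  have U: "\<Union>F = UNIV - msupport \<mu>"
  proof (rule set_eqI, rule iffI)
    fix z assume "z \<in> \<Union>F"
    then obtain x e where xe: "e > 0" "emeasure \<mu> (ball x e) = 0" "z \<in> ball x e" unfolding F_def by auto
    define e' where "e' = e - dist x z"
    have "e' > 0" using xe unfolding e'_def by (simp add: dist_commute)
    have sub: "ball z e' \<subseteq> ball x e"
    proof
      fix w assume "w \<in> ball z e'" then have "dist z w < e'" by simp
      then show "w \<in> ball x e" using dist_triangle[of x w z] unfolding e'_def by simp
    qed
    have "emeasure \<mu> (ball z e') \<le> emeasure \<mu> (ball x e)"
      by (rule emeasure_mono[OF sub]) (simp add: S)
    then have "emeasure \<mu> (ball z e') = 0" using xe by simp
    then show "z \<in> UNIV - msupport \<mu>" using \<open>e' > 0\<close> unfolding msupport_def by force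
  next
    fix z assume "z \<in> UNIV - msupport \<mu>"
    then obtain e where "e > 0" "\<not> emeasure \<mu> (ball z e) > 0" unfolding msupport_def by auto
    then have "ball z e \<in> F" unfolding F_def by (auto simp: not_less)
    moreover have "z \<in> ball z e" using \<open>e > 0\<close> by simp
    ultimately show "z \<in> \<Union>F" by blast
  qed
  have "(\<Union>B\<in>F'. id B) \<in> null_sets \<mu>"
  proof (rule null_sets_UN')
    show "countable F'" by (rule F')
    fix B assume "B \<in> F'"
    then have "B \<in> F" using F' by auto
    then show "id B \<in> null_sets \<mu>" unfolding F_def by (auto simp: S)
  qed
  then show ?thesis using F'(3) U by simp
qed

lemma dot_eq: "((A::real^2^2) *v x + y) \<bullet> \<theta> = x \<bullet> (transpose A *v \<theta>) + y \<bullet> \<theta>"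
proof -
  have "(A *v x) \<bullet> \<theta> = x \<bullet> (\<theta> v* A)"
    by (metis dot_lmul_matrix inner_commute)
  then show ?thesis by (simp add: inner_add_left)
qed



theorem proposition6:
  fixes \<rho> :: "real measure" and \<mu> :: "(real^2) measure"
    and A :: "real^2^2" and y :: "real^2" and \<theta> :: "real^2" and t :: real
  assumes "prob_space \<rho>" and "sets \<rho> = sets borel" and "\<And>x. measure \<rho> {x} = 0"
    and "Pcstar \<mu>"
    and "invertible A"
    and "norm \<theta> = 1"
    and "cdf_of \<rho> t < 1"
  shows "nrcdt \<rho> \<theta> (distr \<mu> borel (\<lambda>x. A *v x + y)) t
       = nrcdt \<rho> ((1 / norm (transpose A *v \<theta>)) *\<^sub>R (transpose A *v \<theta>)) \<mu> t"
proof -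
  have Pm: "prob_space \<mu>" "sets \<mu> = sets borel" "compact (msupport \<mu>)"
    using assms(4) unfolding Pcstar_def by auto
  interpret pm: prob_space \<mu> by (rule Pm(1))
  have sp: "space \<mu> = UNIV" using sets_eq_imp_space_eq[OF Pm(2)] by simp
  define \<phi> where "\<phi> = transpose A *v \<theta>"
  define c where "c = norm \<phi>"
  define \<psi> where "\<psi> = (1 / c) *\<^sub>R \<phi>"
  define b where "b = y \<bullet> \<theta>"
  have "\<theta> \<noteq> 0" using assms(6) by auto
  have "invertible (transpose A)" using assms(5) by (rule transpose_invertible)
  then have "\<exists>B. B ** transpose A = mat 1" by (simp add: invertible_left_inverse)
  then have "\<forall>x. transpose A *v x = 0 \<longrightarrow> x = 0" by (simp add: matrix_left_invertible_ker)
  then have "\<phi> \<noteq> 0" unfolding \<phi>_def using \<open>\<theta> \<noteq> 0\<close> by blast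
  then have c: "c > 0" unfolding c_def by simp
  have npsi: "norm \<psi> = 1" unfolding \<psi>_def c_def using c c_def by simp
  have phipsi: "x \<bullet> \<phi> = c * (x \<bullet> \<psi>)" for x unfolding \<psi>_def using c by simp
  obtain R where R: "R > 0" "\<And>x. x \<in> msupport \<mu> \<Longrightarrow> norm x \<le> R"
    using compact_imp_bounded[OF Pm(3)] unfolding bounded_pos by blast
  have N: "UNIV - msupport \<mu> \<in> null_sets \<mu>" by (rule supp_null[OF Pm(2)])
  have bnd: "\<bar>x \<bullet> \<psi>\<bar> \<le> R" if "x \<in> msupport \<mu>" for x
    using Cauchy_Schwarz_ineq2[of x \<psi>] npsi R(2)[OF that] by simp
  define f where "f = (\<lambda>x. A *v x + y)"
  have fm: "f \<in> measurable \<mu> borel"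
  proof -
    have "continuous_on UNIV f" unfolding f_def by (intro continuous_intros)
    then have "f \<in> borel_measurable borel" by (rule borel_measurable_continuous_onI)
    then show ?thesis by (simp add: measurable_cong_sets[OF Pm(2) refl, of borel])
  qed
  have im: "\<And>v::real^2. (\<lambda>x. x \<bullet> v) \<in> borel_measurable borel"
    by (rule borel_measurable_continuous_onI) (intro continuous_intros)
  have pm_m: "(\<lambda>x. x \<bullet> \<psi>) \<in> borel_measurable \<mu>"
    using im[of \<psi>] by (simp add: measurable_cong_sets[OF Pm(2) refl, of borel])
  have tm: "(\<lambda>x. x \<bullet> \<theta>) \<in> borel_measurable (distr \<mu> borel f)"
    using im[of \<theta>] by (simp add: measurable_cong_sets[OF sets_distr refl, of _ _ f borel])
  define F where "F = cdf_of (radon \<psi> \<mu>)"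
  define F' where "F' = cdf_of (radon \<theta> (distr \<mu> borel f))"
  have Fv: "F s = measure \<mu> {x. x \<bullet> \<psi> \<le> s}" for s
    unfolding F_def cdf_of_def radon_def by (subst measure_distr[OF pm_m]) (auto simp: sp vimage_def atMost_def)
  have F'v: "F' u = measure \<mu> {x. f x \<bullet> \<theta> \<le> u}" for u
  proof -
    have s1: "(\<lambda>x. x \<bullet> \<theta>) -` {..u} \<inter> space (distr \<mu> borel f) = {x. x \<bullet> \<theta> \<le> u}" by auto
    have s2: "{x::real^2. x \<bullet> \<theta> \<le> u} \<in> sets borel"
      by (intro borel_closed closed_Collect_le) (auto intro: continuous_intros)
    have "F' u = measure (distr \<mu> borel f) {x. x \<bullet> \<theta> \<le> u}"
      unfolding F'_def cdf_of_def radon_def by (subst measure_distr[OF tm]) (auto simp: vimage_def atMost_def)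
    also have "\<dots> = measure \<mu> (f -` {x. x \<bullet> \<theta> \<le> u} \<inter> space \<mu>)"
      by (rule measure_distr[OF fm s2])
    also have "\<dots> = measure \<mu> {x. f x \<bullet> \<theta> \<le> u}" by (simp add: sp vimage_def)
    finally show ?thesis .
  qed
  have F'F: "F' u = F ((u - b) / c)" for u
  proof -
    have fx: "f x \<bullet> \<theta> = c * (x \<bullet> \<psi>) + b" for x
      unfolding f_def dot_eq \<phi>_def[symmetric] b_def[symmetric] phipsi ..
    have "{x. f x \<bullet> \<theta> \<le> u} = {x. x \<bullet> \<psi> \<le> (u - b) / c}"
      using c by (auto simp: fx pos_le_divide_eq algebra_simps)
    then show ?thesis using F'v Fv by simp
  qed
  have sets1: "{x. x \<bullet> \<psi> \<le> s} \<in> sets \<mu>" for s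
  proof -
    have "{x. x \<bullet> \<psi> \<le> s} = (\<lambda>x. x \<bullet> \<psi>) -` {..s} \<inter> space \<mu>" by (auto simp: sp)
    then show ?thesis using measurable_sets[OF pm_m, of "{..s}"] by simp
  qed
  have sets2: "{x. x \<bullet> \<psi> > s} \<in> sets \<mu>" for s
  proof -
    have "{x. x \<bullet> \<psi> > s} = (\<lambda>x. x \<bullet> \<psi>) -` {s<..} \<inter> space \<mu>" by (auto simp: sp)
    then show ?thesis using measurable_sets[OF pm_m, of "{s<..}"] by simp
  qed
  have lo: "F s = 0" if "s < -R" for s
  proof -
    have "{x. x \<bullet> \<psi> \<le> s} \<subseteq> UNIV - msupport \<mu>" using bnd that by force
    then have "{x. x \<bullet> \<psi> \<le> s} \<in> null_sets \<mu>"
      by (rule null_sets_subset[OF N sets1])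
    then show ?thesis unfolding Fv by (simp add: measure_def null_setsD1)
  qed
  have hi: "F s = 1" if "s \<ge> R" for s
  proof -
    have "{x. x \<bullet> \<psi> > s} \<subseteq> UNIV - msupport \<mu>" using bnd that by force
    then have nn: "{x. x \<bullet> \<psi> > s} \<in> null_sets \<mu>"
      by (rule null_sets_subset[OF N sets2])
    have "measure \<mu> {x. x \<bullet> \<psi> \<le> s} = measure \<mu> (space \<mu> - {x. x \<bullet> \<psi> > s})"
      by (auto simp: sp not_less intro!: arg_cong[where f="measure \<mu>"])
    also have "\<dots> = 1 - measure \<mu> {x. x \<bullet> \<psi> > s}"
      by (rule pm.prob_compl) (use nn in auto)
    also have "\<dots> = 1" using nn by (simp add: measure_def null_setsD1)
    finally show ?thesis unfolding Fv .
  qed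
  have main: "(let g = gen_inv F' \<circ> cdf_of \<rho> in (g t - mean_rho \<rho> g) / std_rho \<rho> g)
       = (let g = gen_inv F \<circ> cdf_of \<rho> in (g t - mean_rho \<rho> g) / std_rho \<rho> g)"
    by (rule main_abs[where R=R and F=F and F'=F' and c=c and b=b and \<rho>=\<rho> and t=t, OF assms(1,2,3) lo hi _ c F'F assms(7)]) (use R in auto)
  have e1: "nrcdt \<rho> \<theta> (distr \<mu> borel (\<lambda>x. A *v x + y)) t
      = (let g = gen_inv F' \<circ> cdf_of \<rho> in (g t - mean_rho \<rho> g) / std_rho \<rho> g)"
    unfolding nrcdt_def cdt_def F'_def f_def ..
  have e2: "nrcdt \<rho> ((1 / norm (transpose A *v \<theta>)) *\<^sub>R (transpose A *v \<theta>)) \<mu> t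
      = (let g = gen_inv F \<circ> cdf_of \<rho> in (g t - mean_rho \<rho> g) / std_rho \<rho> g)"
    unfolding nrcdt_def cdt_def F_def \<psi>_def c_def \<phi>_def ..
  show ?thesis unfolding e1 e2 by (rule main)
qed


end
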